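(* Let $S$ be a semigroup with a regular element $a$, and let $b\in S$ satisfy $a=aba$. Then for any set $U\subseteq S$ with $S=US^1$ we have $\mathbf{r}_S(a)=\langle\{(bau,u)\mid u\in U\}\rangle$. Consequently, $\mathbf{r}_S(a)$ is finitely generated if and only if $S=US^1$ for some finite set $U\subseteq S$.
   Context: $S^1$ is $S$ if $S$ is a monoid and otherwise $S$ with an identity adjoined. $\mathbf{r}_S(a)=\{(s,t)\in S\times S\mid as=at\}$. For $X\subseteq S\times S$, $\langle X\rangle$ denotes the smallest right congruence on $S$ containing $X$; a right congruence is finitely generated if it equals $\langle X\rangle$ for some finite $X$. *)

theory Defs
  imports Main
begin

text \<open>The semigroup S is the whole (arbitrary) type 'a of class semigroup_mult.\<close>

definition right_congruence :: "('a::semigroup_mult \<times> 'a) set \<Rightarrow> bool" where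
  "right_congruence R \<longleftrightarrow> equiv UNIV R \<and> (\<forall>s t u. (s, t) \<in> R \<longrightarrow> (s * u, t * u) \<in> R)"

definition gen_rcong :: "('a::semigroup_mult \<times> 'a) set \<Rightarrow> ('a \<times> 'a) set" where
  "gen_rcong X = \<Inter> {R. right_congruence R \<and> X \<subseteq> R}"

definition fin_gen_rcong :: "('a::semigroup_mult \<times> 'a) set \<Rightarrow> bool" where
  "fin_gen_rcong R \<longleftrightarrow> (\<exists>X. finite X \<and> R = gen_rcong X)"

definition r_ann :: "'a::semigroup_mult \<Rightarrow> ('a \<times> 'a) set" where
  "r_ann a = {(s, t). a * s = a * t}"

definition right_S1 :: "'a::semigroup_mult set \<Rightarrow> 'a set" where
  "right_S1 U = U \<union> {u * s | u s. u \<in> U}"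

definition regular_elt :: "'a::semigroup_mult \<Rightarrow> bool" where
  "regular_elt a \<longleftrightarrow> (\<exists>x. a = a * x * a)"

end

theory Submission
  imports Defs
begin

lemma gen_least: "right_congruence R \<Longrightarrow> X \<subseteq> R \<Longrightarrow> gen_rcong X \<subseteq> R"
  unfolding gen_rcong_def by blast

lemma gen_mem: "(\<And>R. right_congruence R \<Longrightarrow> X \<subseteq> R \<Longrightarrow> p \<in> R) \<Longrightarrow> p \<in> gen_rcong X"
  unfolding gen_rcong_def by blast

lemma r_ann_rc: "right_congruence (r_ann (a::'a::semigroup_mult))"
  unfolding right_congruence_def r_ann_def equiv_def refl_on_def sym_def trans_def
  by (auto simp: mult.assoc[symmetric])

lemma part1:
  fixes a b :: "'a::semigroup_mult"
  assumes ab: "a = a * b * a" and U: "right_S1 U = UNIV"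
  shows "r_ann a = gen_rcong {(b * a * u, u) | u. u \<in> U}"
proof
  show "gen_rcong {(b * a * u, u) | u. u \<in> U} \<subseteq> r_ann a"
  proof (rule gen_least[OF r_ann_rc])
    show "{(b * a * u, u) | u. u \<in> U} \<subseteq> r_ann a"
      using ab by (auto simp: r_ann_def mult.assoc[symmetric])
  qed
  show "r_ann a \<subseteq> gen_rcong {(b * a * u, u) | u. u \<in> U}"
  proof
    fix p assume p: "p \<in> r_ann a"
    obtain s t where st: "p = (s,t)" "a * s = a * t" using p by (auto simp: r_ann_def)
    show "p \<in> gen_rcong {(b * a * u, u) | u. u \<in> U}"
    proof (rule gen_mem)
      fix R assume R: "right_congruence R" and XR: "{(b * a * u, u) | u. u \<in> U} \<subseteq> R"
      have eq: "equiv UNIV R" and comp: "\<And>s t u. (s,t) \<in> R \<Longrightarrow> (s*u, t*u) \<in> R"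
        using R by (auto simp: right_congruence_def)
      have key: "(b * a * x, x) \<in> R" for x
      proof -
        have "x \<in> right_S1 U" using U by simp
        then consider "x \<in> U" | u v where "u \<in> U" "x = u * v"
          unfolding right_S1_def by blast
        then show ?thesis
        proof cases
          case 1 then show ?thesis using XR by blast
        next
          case 2
          then have "(b * a * u, u) \<in> R" using XR by blast
          from comp[OF this, of v] show ?thesis using 2 by (simp add: mult.assoc)
        qed
      qed
      have "b * a * s = b * a * t" using st(2) by (simp add: mult.assoc)
      moreover have "(s, b*a*s) \<in> R" using key[of s] eq by (meson equiv_def symE)
      moreover have "(b*a*t, t) \<in> R" using key[of t] .
      ultimately show "p \<in> R" using eq st(1) by (metis equiv_def transE)
    qed
  qed
qed

theorem mainTheorem12:
  fixes a b :: "'a::semigroup_mult"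
  assumes "regular_elt a"
    and "a = a * b * a"
  shows "(\<forall>U. right_S1 U = UNIV \<longrightarrow> r_ann a = gen_rcong {(b * a * u, u) | u. u \<in> U})
         \<and> (fin_gen_rcong (r_ann a) \<longleftrightarrow> (\<exists>U :: 'a set. finite U \<and> right_S1 U = UNIV))"
proof (intro conjI allI impI iffI)
  fix U :: "'a set" assume "right_S1 U = UNIV"
  then show "r_ann a = gen_rcong {(b * a * u, u) | u. u \<in> U}" using part1 assms(2) by blast
next
  assume "\<exists>U :: 'a set. finite U \<and> right_S1 U = UNIV"
  then obtain U :: "'a set" where U: "finite U" "right_S1 U = UNIV" by blast
  have "finite {(b * a * u, u) | u. u \<in> U}"
  proof -
    have "{(b * a * u, u) | u. u \<in> U} = (\<lambda>u. (b * a * u, u)) ` U" by blast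
    then show ?thesis using U(1) by simp
  qed
  then show "fin_gen_rcong (r_ann a)"
    unfolding fin_gen_rcong_def using part1[OF assms(2) U(2)] by blast
next
  assume "fin_gen_rcong (r_ann a)"
  then obtain X where X: "finite X" "r_ann a = gen_rcong X" by (auto simp: fin_gen_rcong_def)
  define U' where "U' = fst ` X \<union> snd ` X"
  define V where "V = right_S1 U'"
  define R where "R = {(s,t). s = t \<or> (s \<in> V \<and> t \<in> V)}"
  have Vid: "x \<in> V \<Longrightarrow> x * w \<in> V" for x w
    unfolding V_def right_S1_def by (auto simp: mult.assoc) (metis mult.assoc)
  have "right_congruence R"
    unfolding right_congruence_def R_def equiv_def refl_on_def sym_def trans_def
    using Vid by auto
  moreover have "X \<subseteq> R"
    unfolding R_def V_def right_S1_def U'_def by force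
  ultimately have GR: "gen_rcong X \<subseteq> R" by (rule gen_least)
  have "right_S1 (insert b U') = UNIV"
  proof -
    { fix s :: 'a
      have "(s, b * a * s) \<in> r_ann a" using assms(2)
        by (simp add: r_ann_def mult.assoc[symmetric])
      then have "(s, b * a * s) \<in> R" using GR X(2) by blast
      then have "s = b * a * s \<or> s \<in> V" unfolding R_def by auto
      then have "s \<in> right_S1 (insert b U')"
        unfolding V_def right_S1_def by (auto simp: mult.assoc)
    }
    then show ?thesis by blast
  qed
  moreover have "finite (insert b U')" using X(1) unfolding U'_def by simp
  ultimately show "\<exists>U :: 'a set. finite U \<and> right_S1 U = UNIV" by blast
qed

end
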